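(* Let $\mathcal{C}$ be the class of all generalized Petersen graphs $\mathrm{Pet}(n,k)$ ($2<2k\le n$) satisfying at least one of: (a) $k$ is even, $n$ is odd and $n\equiv\pm2\pmod{k-1}$; (b) $n$ and $k$ are both odd and $n\ge 5k$. Then $\mathcal{C}$ is odd-pentagonal.
   Context: For integers $n,k$ with $2<2k\le n$, the generalized Petersen graph $\mathrm{Pet}(n,k)$ has vertex set $\{u_0,\dots,u_{n-1}\}\cup\{v_0,\dots,v_{n-1}\}$ and edge set $\{u_iu_{i+1}\}\cup\{u_iv_i\}\cup\{v_iv_{i+k}\}$, indices modulo $n$. A class $\mathcal{G}$ of simple graphs is odd-girth-closed if for every positive integer $g$ there is a graph in $\mathcal{G}$ whose odd girth (length of a shortest odd cycle) is at least $g$. An odd-girth-closed class $\mathcal{G}$ is odd-pentagonal if there is a positive integer $g^*$ such that every graph in $\mathcal{G}$ with odd girth greater than $g^*$ admits a homomorphism to the 5-cycle $C_5$. *)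

theory Defs
  imports Main "HOL-Library.Extended_Nat"
begin

text \<open>A graph is a pair (V, E) of a vertex set and a symmetric, irreflexive
adjacency relation E (only edges between vertices of V matter).\<close>

type_synonym 'a graph = "'a set \<times> ('a \<Rightarrow> 'a \<Rightarrow> bool)"

definition is_cycle :: "'a set \<Rightarrow> ('a \<Rightarrow> 'a \<Rightarrow> bool) \<Rightarrow> 'a list \<Rightarrow> bool" where
  "is_cycle V E c \<longleftrightarrow> length c \<ge> 3 \<and> distinct c \<and> set c \<subseteq> V \<and>
     (\<forall>i < length c. E (c ! i) (c ! ((i + 1) mod length c)))"

text \<open>Odd girth: length of a shortest odd cycle (infinity if there is none).\<close>
definition odd_girth :: "'a set \<Rightarrow> ('a \<Rightarrow> 'a \<Rightarrow> bool) \<Rightarrow> enat" where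
  "odd_girth V E = Inf {enat (length c) | c. is_cycle V E c \<and> odd (length c)}"

definition c5_adj :: "nat \<Rightarrow> nat \<Rightarrow> bool" where
  "c5_adj i j \<longleftrightarrow> i < 5 \<and> j < 5 \<and> (j = (i + 1) mod 5 \<or> i = (j + 1) mod 5)"

definition hom_to_C5 :: "'a set \<Rightarrow> ('a \<Rightarrow> 'a \<Rightarrow> bool) \<Rightarrow> bool" where
  "hom_to_C5 V E \<longleftrightarrow> (\<exists>f. (\<forall>v\<in>V. f v < (5::nat)) \<and>
       (\<forall>u\<in>V. \<forall>v\<in>V. E u v \<longrightarrow> c5_adj (f u) (f v)))"

definition odd_girth_closed :: "'a graph set \<Rightarrow> bool" where
  "odd_girth_closed \<G> \<longleftrightarrow> (\<forall>g::nat. g > 0 \<longrightarrow>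
      (\<exists>(V, E) \<in> \<G>. odd_girth V E \<ge> enat g))"

definition odd_pentagonal :: "'a graph set \<Rightarrow> bool" where
  "odd_pentagonal \<G> \<longleftrightarrow> odd_girth_closed \<G> \<and>
     (\<exists>gs::nat. gs > 0 \<and> (\<forall>(V, E) \<in> \<G>. odd_girth V E > enat gs \<longrightarrow> hom_to_C5 V E))"

text \<open>Generalized Petersen graph Pet(n,k): vertex (False, i) is u_i, (True, i) is v_i.\<close>
definition pet_V :: "nat \<Rightarrow> (bool \<times> nat) set" where
  "pet_V n = {(b, i). i < n}"

definition pet_edge :: "nat \<Rightarrow> nat \<Rightarrow> bool \<times> nat \<Rightarrow> bool \<times> nat \<Rightarrow> bool" where
  "pet_edge n k x y \<longleftrightarrow> x \<in> pet_V n \<and> y \<in> pet_V n \<and>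
     ((\<exists>i<n. x = (False, i) \<and> y = (False, (i + 1) mod n)) \<or>
      (\<exists>i<n. x = (False, i) \<and> y = (True, i)) \<or>
      (\<exists>i<n. x = (True, i) \<and> y = (True, (i + k) mod n)))"

definition pet_E :: "nat \<Rightarrow> nat \<Rightarrow> bool \<times> nat \<Rightarrow> bool \<times> nat \<Rightarrow> bool" where
  "pet_E n k x y \<longleftrightarrow> pet_edge n k x y \<or> pet_edge n k y x"

definition Pet :: "nat \<Rightarrow> nat \<Rightarrow> (bool \<times> nat) graph" where
  "Pet n k = (pet_V n, pet_E n k)"

end

theory Submission
  imports Defs
begin

definition step :: "int \<Rightarrow> int \<Rightarrow> int \<Rightarrow> bool" where
  "step M a b \<longleftrightarrow> M dvd (b - a - 1) \<or> M dvd (b - a + 1)"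

lemma step_sym: "step M a b \<Longrightarrow> step M b a"
  unfolding step_def
proof (elim disjE)
  assume "M dvd (b - a - 1)"
  moreover have "a - b + 1 = -(b - a - 1)" by simp
  ultimately show "M dvd (a - b - 1) \<or> M dvd (a - b + 1)" by (metis dvd_minus_iff)
next
  assume "M dvd (b - a + 1)"
  moreover have "a - b - 1 = -(b - a + 1)" by simp
  ultimately show "M dvd (a - b - 1) \<or> M dvd (a - b + 1)" by (metis dvd_minus_iff)
qed

lemma step_shift: "step M a b \<Longrightarrow> M dvd (b - b') \<Longrightarrow> step M a b'"
  unfolding step_def
proof (elim disjE)
  assume "M dvd (b - a - 1)" "M dvd (b - b')"
  then have "M dvd ((b - a - 1) - (b - b'))" by (rule dvd_diff)
  then show "M dvd (b' - a - 1) \<or> M dvd (b' - a + 1)" by (simp add: algebra_simps)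
next
  assume "M dvd (b - a + 1)" "M dvd (b - b')"
  then have "M dvd ((b - a + 1) - (b - b'))" by (rule dvd_diff)
  then show "M dvd (b' - a - 1) \<or> M dvd (b' - a + 1)" by (simp add: algebra_simps)
qed

lemma step_pm1: "b - a = 1 \<or> b - a = -1 \<Longrightarrow> step M a b"
  unfolding step_def by auto

lemma sum_pm1_odd:
  fixes s :: "nat \<Rightarrow> int"
  assumes "\<And>i. s i = 1 \<or> s i = -1"
  shows "odd (\<Sum>i<L. s i) \<longleftrightarrow> odd L"
proof (induction L)
  case 0 then show ?case by simp
next
  case (Suc L)
  have "odd (s L)" using assms[of L] by auto
  then show ?case using Suc by auto
qed

lemma cycle_len_ge:
  fixes g :: "'a \<Rightarrow> int" and M :: int
  assumes M: "M > 0"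
    and st: "\<And>x y. x \<in> V \<Longrightarrow> y \<in> V \<Longrightarrow> E x y \<Longrightarrow> step M (g x) (g y)"
    and cyc: "is_cycle V E c" and od: "odd (length c)"
  shows "M \<le> int (length c)"
proof -
  define L where "L = length c"
  have L3: "L \<ge> 3" and dist: "distinct c" and sub: "set c \<subseteq> V"
    and ed: "\<And>i. i < L \<Longrightarrow> E (c ! i) (c ! ((i + 1) mod L))"
    using cyc unfolding is_cycle_def L_def by auto
  define a where "a i = g (c ! i)" for i
  define d where "d i = a ((i + 1) mod L) - a i" for i
  have sti: "step M (a i) (a ((i + 1) mod L))" if "i < L" for i
  proof -
    have "c ! i \<in> V" using that sub L_def by auto
    moreover have "0 < L" using L3 by simp
    then have "(i + 1) mod L < length c" using L_def by simp
    then have "c ! ((i + 1) mod L) \<in> V" using sub by (meson nth_mem subsetD)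
    ultimately show ?thesis unfolding a_def using st ed that by blast
  qed
  define s where "s i = (if M dvd (d i - 1) then 1 else (-1::int))" for i
  have s_pm: "s i = 1 \<or> s i = -1" for i unfolding s_def by auto
  have ds: "M dvd (d i - s i)" if "i < L" for i
    using sti[OF that] unfolding step_def s_def d_def by auto
  have sumd: "(\<Sum>i<L. d i) = 0"
  proof -
    obtain L' where L': "L = Suc L'" using L3 by (cases L) auto
    have "(\<Sum>i<L. d i) = (\<Sum>i<L'. d i) + d L'" using L' by simp
    also have "(\<Sum>i<L'. d i) = (\<Sum>i<L'. a (Suc i) - a i)"
      by (rule sum.cong) (auto simp: d_def L')
    also have "\<dots> = a L' - a 0" by (rule sum_lessThan_telescope)
    also have "d L' = a 0 - a L'" by (simp add: d_def L')
    finally show ?thesis by simp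
  qed
  have "M dvd (\<Sum>i<L. d i - s i)" by (rule dvd_sum) (use ds in auto)
  then have "M dvd (\<Sum>i<L. s i)" using sumd by (simp add: sum_subtractf)
  then obtain q where q: "(\<Sum>i<L. s i) = M * q" by blast
  have "odd (\<Sum>i<L. s i)" using sum_pm1_odd[OF s_pm] od L_def by simp
  then have "q \<noteq> 0" using q by auto
  have "\<bar>\<Sum>i<L. s i\<bar> \<le> (\<Sum>i<L. \<bar>s i\<bar>)" by (rule sum_abs)
  also have "\<dots> = (\<Sum>i<L. 1)" using s_pm by (intro sum.cong) (auto, metis abs_minus_cancel abs_one)
  also have "\<dots> = int L" by simp
  finally have "\<bar>M * q\<bar> \<le> int L" using q by simp
  moreover have "M \<le> \<bar>M * q\<bar>" using \<open>q \<noteq> 0\<close> M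
    by (simp add: abs_mult)
  ultimately show ?thesis using L_def by simp
qed


lemma odd_girth_ge:
  assumes "\<And>c. is_cycle V E c \<Longrightarrow> odd (length c) \<Longrightarrow> int m \<le> int (length c)"
  shows "enat m \<le> odd_girth V E"
  unfolding odd_girth_def
proof (rule Inf_greatest)
  fix x assume "x \<in> {enat (length c) |c. is_cycle V E c \<and> odd (length c)}"
  then obtain c where "x = enat (length c)" "is_cycle V E c" "odd (length c)" by blast
  then show "enat m \<le> x" using assms by simp
qed

lemma odd_girth_le:
  assumes "is_cycle V E c" "odd (length c)"
  shows "odd_girth V E \<le> enat (length c)"
  unfolding odd_girth_def by (rule Inf_lower) (use assms in blast)

lemma c5_of_step:
  assumes "step 5 a b" shows "c5_adj (nat (a mod 5)) (nat (b mod 5))"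
proof -
  have e1: "b - (a + 1) = b - a - 1" "b - (a - 1) = b - a + 1" by simp_all
  have "b mod 5 = (a + 1) mod 5 \<or> b mod 5 = (a - 1) mod 5"
    using assms unfolding step_def mod_eq_dvd_iff e1 .
  moreover have "(a + 1) mod 5 = (a mod 5 + 1) mod 5" by (simp add: mod_add_left_eq)
  moreover have "(a - 1) mod 5 = (a mod 5 - 1) mod 5" by (simp add: mod_diff_left_eq)
  moreover have "0 \<le> a mod 5" "a mod 5 < 5" by auto
  ultimately obtain r where r: "r = a mod 5" "0 \<le> r" "r < 5" 
     "b mod 5 = (r + 1) mod 5 \<or> b mod 5 = (r - 1) mod 5" by auto
  then have "r = 0 \<or> r = 1 \<or> r = 2 \<or> r = 3 \<or> r = 4" by auto
  then show ?thesis using r unfolding c5_adj_def by (elim disjE) auto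
qed

lemma hom_of_step:
  fixes g :: "'a \<Rightarrow> int"
  assumes "\<And>x y. x \<in> V \<Longrightarrow> y \<in> V \<Longrightarrow> E x y \<Longrightarrow> step 5 (g x) (g y)"
  shows "hom_to_C5 V E"
  unfolding hom_to_C5_def
proof (intro exI[of _ "\<lambda>x. nat (g x mod 5)"] conjI ballI impI)
  fix v show "nat (g v mod 5) < 5" by simp
next
  fix u v assume "u \<in> V" "v \<in> V" "E u v"
  then show "c5_adj (nat (g u mod 5)) (nat (g v mod 5))" using assms c5_of_step by blast
qed

definition Hf :: "int \<Rightarrow> int \<Rightarrow> int \<Rightarrow> int \<Rightarrow> int" where
  "Hf A n \<sigma> p = \<sigma> + 2 * ((A * p + (1 - \<sigma>) * n) div (2 * n))"

lemma divdiff01: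
  fixes X Y D :: int
  assumes "D > 0" "0 \<le> Y - X" "Y - X < D"
  shows "Y div D - X div D = 0 \<or> Y div D - X div D = 1"
proof -
  have a: "X div D \<le> Y div D" using assms by (simp add: zdiv_mono1)
  have "Y div D \<le> (X + D) div D" by (rule zdiv_mono1) (use assms in auto)
  also have "(X + D) div D = X div D + 1" using assms by simp
  finally show ?thesis using a by linarith
qed

lemma divdiff23:
  fixes X Y D :: int
  assumes "D > 0" "2 * D \<le> Y - X" "Y - X \<le> 3 * D"
  shows "Y div D - X div D = 2 \<or> Y div D - X div D = 3"
proof -
  have "(X + 2 * D) div D \<le> Y div D" by (rule zdiv_mono1) (use assms in auto)
  moreover have "(X + 2 * D) div D = X div D + 2" using assms by simp
  moreover have "Y div D \<le> (X + 3 * D) div D" by (rule zdiv_mono1) (use assms in auto)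
  moreover have "(X + 3 * D) div D = X div D + 3" using assms by simp
  ultimately show ?thesis by linarith
qed

lemma HA:
  assumes n: "n > 0" and s: "\<sigma> \<in> {0,1}" "\<sigma>' \<in> {0,1}" "\<sigma> \<noteq> \<sigma>'"
    and d: "\<bar>A * (p' - p)\<bar> < n"
  shows "Hf A n \<sigma>' p' - Hf A n \<sigma> p = 1 \<or> Hf A n \<sigma>' p' - Hf A n \<sigma> p = -1"
proof -
  have key: "Hf A n 0 y - Hf A n 1 x = 1 \<or> Hf A n 0 y - Hf A n 1 x = -1"
    if "\<bar>A * (y - x)\<bar> < n" for x y
  proof -
    have "0 \<le> (A * y + n) - A * x" "(A * y + n) - A * x < 2 * n"
      using that by (auto simp: algebra_simps abs_less_iff)
    then have "(A * y + n) div (2*n) - (A * x) div (2*n) = 0 \<or>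
               (A * y + n) div (2*n) - (A * x) div (2*n) = 1"
      using divdiff01[of "2*n"] n by auto
    then show ?thesis unfolding Hf_def by auto
  qed
  show ?thesis
  proof (cases "\<sigma> = 1")
    case True
    then have "\<sigma>' = 0" using s by auto
    then show ?thesis using key[OF d] True by simp
  next
    case False
    then have "\<sigma> = 0" "\<sigma>' = 1" using s by auto
    moreover have d2: "\<bar>A * (p - p')\<bar> < n" using d by (simp add: abs_minus_commute right_diff_distrib)
    moreover have "Hf A n 0 p - Hf A n 1 p' = 1 \<or> Hf A n 0 p - Hf A n 1 p' = -1"
      using key[OF d2] .
    ultimately have "Hf A n 0 p - Hf A n 1 p' = 1 \<or> Hf A n 0 p - Hf A n 1 p' = -1" by simp
    then show ?thesis using \<open>\<sigma> = 0\<close> \<open>\<sigma>' = 1\<close> by (elim disjE) simp_all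
  qed
qed

lemma HB:
  assumes n: "n > 0" and s: "\<sigma> \<in> {0,1}" and k: "4 * n \<le> A * k" "A * k \<le> 6 * n"
  shows "Hf A n \<sigma> (p + k) - Hf A n \<sigma> p = 4 \<or> Hf A n \<sigma> (p + k) - Hf A n \<sigma> p = 6"
proof -
  let ?Y = "A * (p + k) + (1 - \<sigma>) * n" and ?X = "A * p + (1 - \<sigma>) * n"
  have "?Y - ?X = A * k" by (simp add: algebra_simps)
  then have "?Y div (2*n) - ?X div (2*n) = 2 \<or> ?Y div (2*n) - ?X div (2*n) = 3"
    using divdiff23[of "2*n" ?Y ?X] n k by auto
  then show ?thesis unfolding Hf_def by auto
qed

lemma HP0:
  assumes n: "n > 0" and A: "odd A"
  shows "Hf A n 1 (p + n) = Hf A n 0 p + A"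
proof -
  obtain t where t: "A = 2 * t + 1" using A oddE by blast
  have "A * (p + n) = (A * p + n) + t * (2 * n)" by (simp add: t algebra_simps)
  then have "(A * (p + n)) div (2 * n) = (A * p + n) div (2 * n) + t" using n by simp
  then show ?thesis unfolding Hf_def using t by simp
qed

lemma HP1:
  assumes n: "n > 0" and A: "odd A"
  shows "Hf A n 0 (p + n) = Hf A n 1 p + A"
proof -
  obtain t where t: "A = 2 * t + 1" using A oddE by blast
  have "A * (p + n) + n = A * p + (t + 1) * (2 * n)" by (simp add: t algebra_simps)
  then have "(A * (p + n) + n) div (2 * n) = (A * p) div (2 * n) + (t + 1)" using n by simp
  then show ?thesis unfolding Hf_def using t by simp
qed


definition gu :: "int \<Rightarrow> int \<Rightarrow> int \<Rightarrow> int" where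
  "gu A n p = Hf A n (p mod 2) p"

definition gv :: "int \<Rightarrow> int \<Rightarrow> int \<Rightarrow> int \<Rightarrow> int" where
  "gv A n e p = Hf A n ((p + 1) mod 2) (p + e)"

lemma Hf_per:
  assumes "n > 0" "odd n" "odd A" "\<sigma> = q mod 2"
  shows "Hf A n ((q + n) mod 2) (p + n) = Hf A n \<sigma> p + A"
proof (cases "q mod 2 = 0")
  case True
  then have "(q + n) mod 2 = 1" using assms by presburger
  then show ?thesis using HP0[OF assms(1,3)] True assms(4) by simp
next
  case False
  then have "(q + n) mod 2 = 0" "q mod 2 = 1" using assms by presburger+
  then show ?thesis using HP1[OF assms(1,3)] assms(4) by simp
qed

lemma gu_per: "n > 0 \<Longrightarrow> odd n \<Longrightarrow> odd A \<Longrightarrow> gu A n (p + n) = gu A n p + A"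
  unfolding gu_def using Hf_per[of n A "p mod 2" p p] by simp

lemma gv_per: "n > 0 \<Longrightarrow> odd n \<Longrightarrow> odd A \<Longrightarrow> gv A n e (p + n) = gv A n e p + A"
  unfolding gv_def using Hf_per[of n A "(p + 1) mod 2" "p + 1" "p + e"]
  by (simp add: algebra_simps)

definition gg :: "(int \<Rightarrow> int) \<Rightarrow> (int \<Rightarrow> int) \<Rightarrow> bool \<times> nat \<Rightarrow> int" where
  "gg fu fv x = (if fst x then fv (int (snd x)) else fu (int (snd x)))"

lemma graph_step:
  assumes n: "0 < n" "k < n"
    and pu: "\<And>p. M dvd (fu (p + int n) - fu p)" and pv: "\<And>p. M dvd (fv (p + int n) - fv p)"
    and s1: "\<And>p. step M (fu p) (fu (p + 1))" and s2: "\<And>p. step M (fu p) (fv p)"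
    and s3: "\<And>p. step M (fv p) (fv (p + int k))"
    and E: "pet_E n k x y"
  shows "step M (gg fu fv x) (gg fu fv y)"
proof -
  have e: "step M (gg fu fv x) (gg fu fv y)" if pe: "pet_edge n k x y" for x y
  proof -
    consider (a) i where "i < n" "x = (False, i)" "y = (False, (i + 1) mod n)"
      | (b) i where "i < n" "x = (False, i)" "y = (True, i)"
      | (c) i where "i < n" "x = (True, i)" "y = (True, (i + k) mod n)"
      using pe unfolding pet_edge_def by blast
    then show ?thesis
    proof cases
      case (a i)
      show ?thesis
      proof (cases "i + 1 < n")
        case True
        then show ?thesis using a s1[of "int i"] by (simp add: gg_def ac_simps)
      next
        case False
        then have "i + 1 = n" using a by simp
        then have m: "(i + 1) mod n = 0" by simp
        have ii: "int i + 1 = 0 + int n" using \<open>i + 1 = n\<close> by simp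
        have "M dvd (fu (int i + 1) - fu 0)" unfolding ii using pu[of 0] by simp
        then show ?thesis using a m step_shift[OF s1[of "int i"]] by (simp add: gg_def)
      qed
    next
      case (b i)
      then show ?thesis using s2[of "int i"] by (simp add: gg_def)
    next
      case (c i)
      show ?thesis
      proof (cases "i + k < n")
        case True
        then show ?thesis using c s3[of "int i"] by (simp add: gg_def)
      next
        case False
        have "i + k - n < n" using c n by simp
        then have m: "(i + k) mod n = i + k - n" using False by (simp add: le_mod_geq)
        have i2: "int (i + k - n) + int n = int i + int k" using False by simp
        have "M dvd (fv (int i + int k) - fv (int (i + k - n)))" using pv[of "int (i + k - n)"] i2 by simp
        then show ?thesis using c m step_shift[OF s3[of "int i"]] by (simp add: gg_def)
      qed
    qed
  qed
  show ?thesis using E unfolding pet_E_def by (metis e step_sym)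
qed


lemma mod2_cases: "(p::int) mod 2 \<in> {0,1}" by auto

lemma step_u:
  assumes "n > 0" "0 \<le> A" "A < n"
  shows "step M (gu A n p) (gu A n (p + 1))"
proof -
  have "(p + 1) mod 2 \<noteq> p mod 2" by presburger
  moreover have "\<bar>A * ((p + 1) - p)\<bar> < n" using assms by simp
  ultimately show ?thesis unfolding gu_def
    using HA[OF assms(1) mod2_cases[of p] mod2_cases[of "p+1"]] step_pm1 by metis
qed

lemma step_spoke_b:
  assumes "n > 0"
  shows "step M (gu A n p) (gv A n 0 p)"
proof -
  have "(p + 1) mod 2 \<noteq> p mod 2" by presburger
  moreover have "\<bar>A * (p - p)\<bar> < n" using assms by simp
  ultimately show ?thesis unfolding gu_def gv_def
    using HA[OF assms(1) mod2_cases[of p] mod2_cases[of "p+1"]] step_pm1 by simp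
qed

lemma step_inner_b:
  assumes "n > 0" "odd k" "\<bar>A * k\<bar> < n"
  shows "step M (gv A n 0 p) (gv A n 0 (p + k))"
proof -
  have "(p + k + 1) mod 2 \<noteq> (p + 1) mod 2" using assms by presburger
  moreover have "\<bar>A * ((p + k) - p)\<bar> < n" using assms by simp
  ultimately show ?thesis unfolding gv_def
    using HA[OF assms(1) mod2_cases[of "p+1"] mod2_cases[of "p+k+1"]] step_pm1 by simp
qed

lemma step_spoke_a:
  assumes "n > 0" "0 \<le> A" "A < n"
  shows "step M (gu A n p) (gv A n 1 p)"
  using step_u[OF assms, of M p] unfolding gu_def gv_def by simp

lemma step_inner_a:
  assumes "n > 0" "even k" "4 * n \<le> A * k" "A * k \<le> 6 * n"
  shows "step 5 (gv A n 1 p) (gv A n 1 (p + k))"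
proof -
  have "(p + k + 1) mod 2 = (p + 1) mod 2" using assms by presburger
  then have "gv A n 1 (p + k) = Hf A n ((p + 1) mod 2) ((p + 1) + k)" unfolding gv_def
    by (simp add: algebra_simps)
  moreover have "gv A n 1 p = Hf A n ((p + 1) mod 2) (p + 1)" unfolding gv_def by simp
  ultimately have "gv A n 1 (p + k) - gv A n 1 p = 4 \<or> gv A n 1 (p + k) - gv A n 1 p = 6"
    using HB[OF assms(1) mod2_cases assms(3,4)] by simp
  then show ?thesis unfolding step_def by auto
qed


lemma pet_E_sym: "pet_E n k x y \<Longrightarrow> pet_E n k y x" unfolding pet_E_def by blast

lemma cyc_a:
  assumes k: "2 \<le> k" "k < n"
  defines "c \<equiv> map (\<lambda>j. (False, j)) [0..<Suc k] @ [(True, k), (True, 0)]"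
  shows "is_cycle (pet_V n) (pet_E n k) c" "length c = k + 3"
proof -
  show len: "length c = k + 3" unfolding c_def by simp
  have c1: "c ! i = (False, i)" if "i \<le> k" for i
    unfolding c_def using that by (simp add: nth_append)
  have c2: "c ! (Suc k) = (True, k)" "c ! (Suc (Suc k)) = (True, 0)"
    unfolding c_def by (simp_all add: nth_append)
  have dist: "distinct c" unfolding c_def using k by (auto simp: distinct_map inj_on_def)
  have sub: "set c \<subseteq> pet_V n" unfolding c_def pet_V_def using k by auto
  have ed: "pet_E n k (c ! i) (c ! ((i + 1) mod length c))" if "i < length c" for i
  proof -
    have "i < k \<or> i = k \<or> i = Suc k \<or> i = Suc (Suc k)" using that len by auto
    then show ?thesis
    proof (elim disjE)
      assume "i < k"
      then have "(i + 1) mod length c = i + 1" using len by simp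
      then show ?thesis using \<open>i < k\<close> c1[of i] c1[of "i+1"] k
        unfolding pet_E_def pet_edge_def pet_V_def by auto
    next
      assume "i = k"
      then have "(i + 1) mod length c = Suc k" using len by simp
      then show ?thesis using \<open>i = k\<close> c1[of k] c2 k
        unfolding pet_E_def pet_edge_def pet_V_def by auto
    next
      assume "i = Suc k"
      then have "(i + 1) mod length c = Suc (Suc k)" using len by simp
      then show ?thesis using \<open>i = Suc k\<close> c2 k
        unfolding pet_E_def pet_edge_def pet_V_def by auto
    next
      assume "i = Suc (Suc k)"
      then have "i + 1 = length c" using len by simp
      then have "(i + 1) mod length c = 0" by simp
      then show ?thesis using \<open>i = Suc (Suc k)\<close> c2 c1[of 0] k
        unfolding pet_E_def pet_edge_def pet_V_def by auto
    qed
  qed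
  show "is_cycle (pet_V n) (pet_E n k) c"
    unfolding is_cycle_def using len dist sub ed by auto
qed

lemma cyc_5:
  assumes k: "0 < k" and n: "n = 5 * k"
  defines "c \<equiv> map (\<lambda>j. (True, j * k)) [0..<5]"
  shows "is_cycle (pet_V n) (pet_E n k) c" "length c = 5"
proof -
  show len: "length c = 5" unfolding c_def by simp
  have c1: "c ! i = (True, i * k)" if "i < 5" for i
    unfolding c_def using that by simp
  have dist: "distinct c" unfolding c_def using k by (auto simp: distinct_map inj_on_def)
  have sub: "set c \<subseteq> pet_V n" unfolding c_def pet_V_def using k n by auto
  have ed: "pet_E n k (c ! i) (c ! ((i + 1) mod length c))" if "i < length c" for i
  proof (cases "i < 4")
    case True
    then have m: "(i + 1) mod length c = i + 1" using len by simp
    have "i * k + k < n" using True n k by (simp add: algebra_simps)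
    then have "pet_edge n k (True, i * k) (True, (i + 1) * k)"
      unfolding pet_edge_def pet_V_def using True n k
      by (auto intro!: exI[of _ "i * k"])
    then show ?thesis unfolding pet_E_def using m c1[of i] c1[of "i+1"] True by simp
  next
    case False
    then have i4: "i = 4" using that len by simp
    then have m: "(i + 1) mod length c = 0" using len by simp
    have "pet_edge n k (True, 4 * k) (True, 0)"
      unfolding pet_edge_def pet_V_def using n k
      by (auto intro!: exI[of _ "4 * k"])
    then show ?thesis unfolding pet_E_def using m c1[of 4] c1[of 0] i4 by simp
  qed
  show "is_cycle (pet_V n) (pet_E n k) c"
    unfolding is_cycle_def using len dist sub ed by auto
qed


lemma good_b:
  fixes n k :: nat and M :: int
  assumes "0 < n" "k < n" "odd n" "odd k" "odd M" "0 < M" "M * int k < int n" "M < int n"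
    and "pet_E n k x y"
  shows "step M (gg (gu M (int n)) (gv M (int n) 0) x) (gg (gu M (int n)) (gv M (int n) 0) y)"
proof (rule graph_step[OF assms(1,2) _ _ _ _ _ assms(9)])
  have n: "int n > 0" "odd (int n)" using assms by auto
  show "M dvd (gu M (int n) (p + int n) - gu M (int n) p)" for p
    using gu_per[OF n assms(5)] by simp
  show "M dvd (gv M (int n) 0 (p + int n) - gv M (int n) 0 p)" for p
    using gv_per[OF n assms(5)] by simp
  show "step M (gu M (int n) p) (gu M (int n) (p + 1))" for p
    using step_u[OF n(1)] assms by simp
  show "step M (gu M (int n) p) (gv M (int n) 0 p)" for p
    using step_spoke_b[OF n(1)] by simp
  show "step M (gv M (int n) 0 p) (gv M (int n) 0 (p + int k))" for p
    using step_inner_b[OF n(1)] assms by simp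
qed

lemma good_a:
  fixes n k :: nat and W :: int
  assumes "0 < n" "k < n" "odd n" "even k" "odd W" "0 < W" "5 * W < int n"
    "4 * int n \<le> 5 * W * int k" "5 * W * int k \<le> 6 * int n"
    and "pet_E n k x y"
  shows "step 5 (gg (gu (5 * W) (int n)) (gv (5 * W) (int n) 1) x) (gg (gu (5 * W) (int n)) (gv (5 * W) (int n) 1) y)"
proof (rule graph_step[OF assms(1,2) _ _ _ _ _ assms(10)])
  have n: "int n > 0" "odd (int n)" using assms by auto
  have A: "odd (5 * W)" using assms by simp
  show "5 dvd (gu (5 * W) (int n) (p + int n) - gu (5 * W) (int n) p)" for p
    using gu_per[OF n A] by simp
  show "5 dvd (gv (5 * W) (int n) 1 (p + int n) - gv (5 * W) (int n) 1 p)" for p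
    using gv_per[OF n A] by simp
  show "step 5 (gu (5 * W) (int n) p) (gu (5 * W) (int n) (p + 1))" for p
    using step_u[OF n(1)] assms by simp
  show "step 5 (gu (5 * W) (int n) p) (gv (5 * W) (int n) 1 p)" for p
    using step_spoke_a[OF n(1)] assms by simp
  show "step 5 (gv (5 * W) (int n) 1 p) (gv (5 * W) (int n) 1 (p + int k))" for p
    using step_inner_a[OF n(1)] assms by simp
qed


lemma closed_part:
  fixes g :: nat
  shows "enat g \<le> odd_girth (pet_V (6 * g + 15)) (pet_E (6 * g + 15) 3)"
proof -
  define n where "n = 6 * g + 15"
  define M where "M = int (2 * g + 1)"
  have "enat (2 * g + 1) \<le> odd_girth (pet_V n) (pet_E n 3)"
  proof (rule odd_girth_ge)
    fix c assume c: "is_cycle (pet_V n) (pet_E n 3) c" "odd (length c)"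
    have "M \<le> int (length c)"
    proof (rule cycle_len_ge[OF _ _ c])
      show "0 < M" unfolding M_def by simp
      fix x y assume "x \<in> pet_V n" "y \<in> pet_V n" "pet_E n 3 x y"
      then show "step M (gg (gu M (int n)) (gv M (int n) 0) x) (gg (gu M (int n)) (gv M (int n) 0) y)"
        by (intro good_b) (auto simp: M_def n_def)
    qed
    then show "int (2 * g + 1) \<le> int (length c)" unfolding M_def .
  qed
  moreover have "enat g \<le> enat (2 * g + 1)" by simp
  ultimately show ?thesis unfolding n_def by (meson order.trans)
qed

lemma hom_part:
  fixes n k :: nat
  assumes k: "2 < 2 * k" "2 * k \<le> n"
    and cases: "(even k \<and> odd n \<and> ((int k - 1) dvd (int n - 2) \<or> (int k - 1) dvd (int n + 2))) \<or>
        (odd n \<and> odd k \<and> n \<ge> 5 * k)"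
    and og: "enat 20 < odd_girth (pet_V n) (pet_E n k)"
  shows "hom_to_C5 (pet_V n) (pet_E n k)"
proof -
  have kn: "k < n" "0 < n" "2 \<le> k" using k by auto
  show ?thesis
  proof (rule disjE[OF cases])
    assume "even k \<and> odd n \<and> ((int k - 1) dvd (int n - 2) \<or> (int k - 1) dvd (int n + 2))"
    then have ek: "even k" and on: "odd n" and dv: "(int k - 1) dvd (int n - 2) \<or> (int k - 1) dvd (int n + 2)"
      by simp_all
    have k18: "18 \<le> k"
    proof (rule ccontr)
      assume "\<not> 18 \<le> k"
      have "odd_girth (pet_V n) (pet_E n k) \<le> enat (k + 3)"
        using odd_girth_le[OF cyc_a(1)[OF kn(3) kn(1)]] cyc_a(2)[OF kn(3) kn(1)] ek
        by (metis even_add odd_numeral)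
      also have "enat (k + 3) \<le> enat 20" using \<open>\<not> 18 \<le> k\<close> by simp
      finally show False using og by simp
    qed
    define K N where "K = int k" and "N = int n"
    have K18: "18 \<le> K" using k18 K_def by simp
    have oN: "odd N" using on N_def by simp
    obtain m where mprops: "odd m" "0 < m" "5 * m < N" "4 * N \<le> 5 * m * K" "5 * m * K \<le> 6 * N"
    proof -
      from dv consider (p) m where "N - 2 = (K - 1) * m" | (q) m where "N + 2 = (K - 1) * m"
        unfolding K_def N_def by (metis dvdE)
      then show ?thesis
      proof cases
        case (p m)
        have "0 < m"
        proof (rule ccontr)
          assume "\<not> 0 < m"
          then have "(K - 1) * m \<le> 0" using K18 by (simp add: mult_nonneg_nonpos)
          then show False using p kn N_def by simp
        qed
        have "odd m"
        proof
          assume "even m"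
          then have "even ((K - 1) * m)" by simp
          then have "even (N - 2)" using p by simp
          then show False using oN by simp
        qed
        have km: "18 * m \<le> K * m" using mult_right_mono[of 18 K m] K18 \<open>0 < m\<close> by simp
        have e: "N = K * m - m + 2" using p by (simp add: algebra_simps)
        have r: "5 * m * K = 5 * (K * m)" by (simp add: algebra_simps)
        have "5 * m < N" "4 * N \<le> 5 * m * K" "5 * m * K \<le> 6 * N"
          unfolding r using km e \<open>0 < m\<close> by linarith+
        then show ?thesis using that[of m] \<open>odd m\<close> \<open>0 < m\<close> by blast
      next
        case (q m)
        have "0 < m"
        proof (rule ccontr)
          assume "\<not> 0 < m"
          then have "(K - 1) * m \<le> 0" using K18 by (simp add: mult_nonneg_nonpos)
          then show False using q N_def by simp
        qed
        have "odd m"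
        proof
          assume "even m"
          then have "even ((K - 1) * m)" by simp
          then have "even (N + 2)" using q by simp
          then show False using oN by simp
        qed
        have km: "18 * m \<le> K * m" using mult_right_mono[of 18 K m] K18 \<open>0 < m\<close> by simp
        have e: "N = K * m - m - 2" using q by (simp add: algebra_simps)
        have r: "5 * m * K = 5 * (K * m)" by (simp add: algebra_simps)
        have "5 * m < N" "4 * N \<le> 5 * m * K" "5 * m * K \<le> 6 * N"
          unfolding r using km e \<open>0 < m\<close> by linarith+
        then show ?thesis using that[of m] \<open>odd m\<close> \<open>0 < m\<close> by blast
      qed
    qed
    have m3: "5 * m < int n" "4 * int n \<le> 5 * m * int k" "5 * m * int k \<le> 6 * int n"
      using mprops unfolding K_def N_def by simp_all
    have G: "step 5 (gg (gu (5 * m) (int n)) (gv (5 * m) (int n) 1) x) (gg (gu (5 * m) (int n)) (gv (5 * m) (int n) 1) y)"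
      if "pet_E n k x y" for x y
      using good_a[OF kn(2) kn(1) on ek mprops(1,2) m3 that] .
    show ?thesis by (rule hom_of_step, rule G)
  next
    assume "odd n \<and> odd k \<and> n \<ge> 5 * k"
    then have on: "odd n" and ok: "odd k" and n5: "5 * k \<le> n" by simp_all
    have "n \<noteq> 5 * k"
    proof
      assume "n = 5 * k"
      then have "odd_girth (pet_V n) (pet_E n k) \<le> enat 5"
        using odd_girth_le[OF cyc_5(1)] cyc_5(2) kn by fastforce
      then show False using less_le_trans[OF og] by fastforce
    qed
    then have n5': "5 * k < n" using n5 by simp
    show ?thesis
    proof (rule hom_of_step[where g="gg (gu 5 (int n)) (gv 5 (int n) 0)"])
      fix x y assume "x \<in> pet_V n" "y \<in> pet_V n" "pet_E n k x y"
      then show "step 5 (gg (gu 5 (int n)) (gv 5 (int n) 0) x) (gg (gu 5 (int n)) (gv 5 (int n) 0) y)"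
        by (intro good_b) (use kn on ok n5' in auto)
    qed
  qed
qed

theorem corollary7:
  shows "odd_pentagonal
    {Pet n k | n k. 2 < 2 * k \<and> 2 * k \<le> n \<and>
       ((even k \<and> odd n \<and>
          ((int k - 1) dvd (int n - 2) \<or> (int k - 1) dvd (int n + 2))) \<or>
        (odd n \<and> odd k \<and> n \<ge> 5 * k))}"
  unfolding odd_pentagonal_def
proof (intro conjI)
  show "odd_girth_closed {Pet n k | n k. 2 < 2 * k \<and> 2 * k \<le> n \<and>
       ((even k \<and> odd n \<and>
          ((int k - 1) dvd (int n - 2) \<or> (int k - 1) dvd (int n + 2))) \<or>
        (odd n \<and> odd k \<and> n \<ge> 5 * k))}"
    unfolding odd_girth_closed_def
  proof (intro allI impI)
    fix g :: nat assume "0 < g"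
    have mem: "Pet (6 * g + 15) 3 \<in> {Pet n k | n k. 2 < 2 * k \<and> 2 * k \<le> n \<and>
       ((even k \<and> odd n \<and>
          ((int k - 1) dvd (int n - 2) \<or> (int k - 1) dvd (int n + 2))) \<or>
        (odd n \<and> odd k \<and> n \<ge> 5 * k))}"
      by (rule CollectI, rule exI[of _ "6 * g + 15"], rule exI[of _ 3]) simp
    show "\<exists>(V, E)\<in>{Pet n k | n k. 2 < 2 * k \<and> 2 * k \<le> n \<and>
       ((even k \<and> odd n \<and>
          ((int k - 1) dvd (int n - 2) \<or> (int k - 1) dvd (int n + 2))) \<or>
        (odd n \<and> odd k \<and> n \<ge> 5 * k))}. enat g \<le> odd_girth V E"
      by (rule bexI[OF _ mem]) (simp add: Pet_def closed_part)
  qed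
next
  show "\<exists>gs. 0 < gs \<and> (\<forall>(V, E)\<in>{Pet n k | n k. 2 < 2 * k \<and> 2 * k \<le> n \<and>
       ((even k \<and> odd n \<and>
          ((int k - 1) dvd (int n - 2) \<or> (int k - 1) dvd (int n + 2))) \<or>
        (odd n \<and> odd k \<and> n \<ge> 5 * k))}. enat gs < odd_girth V E \<longrightarrow> hom_to_C5 V E)"
  proof (intro exI[of _ 20] conjI ballI)
    fix x assume "x \<in> {Pet n k | n k. 2 < 2 * k \<and> 2 * k \<le> n \<and>
       ((even k \<and> odd n \<and>
          ((int k - 1) dvd (int n - 2) \<or> (int k - 1) dvd (int n + 2))) \<or>
        (odd n \<and> odd k \<and> n \<ge> 5 * k))}"
    then obtain n k where x: "x = Pet n k" and c: "2 < 2 * k" "2 * k \<le> n"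
      "(even k \<and> odd n \<and> ((int k - 1) dvd (int n - 2) \<or> (int k - 1) dvd (int n + 2))) \<or>
        (odd n \<and> odd k \<and> n \<ge> 5 * k)" by blast
    show "case x of (V, E) \<Rightarrow> enat 20 < odd_girth V E \<longrightarrow> hom_to_C5 V E"
      unfolding x Pet_def using hom_part[OF c] by simp
  qed simp
qed

end
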